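(* For all $n\ge 3$, the state complexity of $((U_{\{0\},n}(a,b,c))^* )^R$ is $2^n$.
   Context: The state complexity of a regular language is the number of states of its minimal complete DFA. For $n\ge 3$, $\mathcal{U}_n(a,b,c)$ is the DFA over $\{a,b,c\}$ with states $\{0,\dots,n-1\}$ and initial state $0$, where $a$ maps $i\mapsto i+1\pmod n$, $b$ swaps $0$ and $1$ fixing other states, and $c$ maps $n-1$ to $0$ fixing other states. $U_{\{0\},n}(a,b,c)$ is the language accepted by $\mathcal{U}_n(a,b,c)$ with final state set $\{0\}$. $L^*$ is the Kleene star and $L^R$ the reversal of $L$. *)

theory Defs
  imports Main
begin

datatype sym = SA | SB | SC

type_synonym lang = "sym list set"

definition complete_dfa :: "nat \<Rightarrow> (nat \<Rightarrow> sym \<Rightarrow> nat) \<Rightarrow> nat \<Rightarrow> nat set \<Rightarrow> bool" where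
  "complete_dfa k \<delta> q0 F \<longleftrightarrow> q0 < k \<and> (\<forall>q<k. \<forall>s. \<delta> q s < k) \<and> F \<subseteq> {..<k}"

definition dfa_lang :: "(nat \<Rightarrow> sym \<Rightarrow> nat) \<Rightarrow> nat \<Rightarrow> nat set \<Rightarrow> lang" where
  "dfa_lang \<delta> q0 F = {w. foldl \<delta> q0 w \<in> F}"

definition state_complexity :: "lang \<Rightarrow> nat" where
  "state_complexity L = (LEAST k. \<exists>\<delta> q0 F. complete_dfa k \<delta> q0 F \<and> dfa_lang \<delta> q0 F = L)"

fun U_delta :: "nat \<Rightarrow> nat \<Rightarrow> sym \<Rightarrow> nat" where
  "U_delta n i SA = (i + 1) mod n"
| "U_delta n i SB = (if i = 0 then 1 else if i = 1 then 0 else i)"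
| "U_delta n i SC = (if i = n - 1 then 0 else i)"

definition U0 :: "nat \<Rightarrow> lang" where
  "U0 n = dfa_lang (U_delta n) 0 {0}"

definition kstar :: "lang \<Rightarrow> lang" where
  "kstar L = {concat ws | ws. set ws \<subseteq> L}"

definition reversal :: "lang \<Rightarrow> lang" where
  "reversal L = rev ` L"

end

theory Submission imports Defs "HOL-Library.Nat_Bijection" begin

definition PP :: "nat \<Rightarrow> sym list \<Rightarrow> nat set" where
  "PP n u = {q. q < n \<and> foldl (U_delta n) q u = 0}"

lemma d_lt: "n \<ge> 3 \<Longrightarrow> q < n \<Longrightarrow> U_delta n q x < n"
  by (cases x) auto

lemma run_lt: "n \<ge> 3 \<Longrightarrow> q < n \<Longrightarrow> foldl (U_delta n) q v < n"
  by (induction v arbitrary: q) (auto simp: d_lt)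

lemma PP_app: "n \<ge> 3 \<Longrightarrow> PP n (v @ u) = {q. q < n \<and> foldl (U_delta n) q v \<in> PP n u}"
  unfolding PP_def using run_lt by auto

lemma reach_pre: "n \<ge> 3 \<Longrightarrow> S \<in> range (PP n) \<Longrightarrow> {q. q < n \<and> foldl (U_delta n) q v \<in> S} \<in> range (PP n)"
proof -
  assume n: "n \<ge> 3" and "S \<in> range (PP n)"
  then obtain u where "S = PP n u" by blast
  then have "{q. q < n \<and> foldl (U_delta n) q v \<in> S} = PP n (v @ u)" using PP_app[OF n] by simp
  then show ?thesis by simp
qed
lemma run_rep_a: "n \<ge> 3 \<Longrightarrow> q < n \<Longrightarrow> foldl (U_delta n) q (replicate k SA) = (q + k) mod n"
proof (induction k arbitrary: q)
  case 0 then show ?case by simp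
next
  case (Suc k)
  have "foldl (U_delta n) q (replicate (Suc k) SA) = foldl (U_delta n) ((q+1) mod n) (replicate k SA)"
    by simp
  also have "\<dots> = ((q+1) mod n + k) mod n" using Suc by simp
  also have "\<dots> = (q + Suc k) mod n" by (simp add: mod_add_left_eq)
  finally show ?case .
qed

lemma run_swap: assumes "n \<ge> 3" "t + 2 < n" "q < n"
  shows "foldl (U_delta n) q (replicate (n-t) SA @ [SB] @ replicate t SA)
     = (if q = t then t+1 else if q = t+1 then t else q)"
proof -
  have r1: "foldl (U_delta n) q (replicate (n-t) SA) = (q + (n - t)) mod n"
    using run_rep_a assms by simp
  have lt: "(q + (n - t)) mod n < n" using assms by simp
  define m where "m = (q + (n - t)) mod n"
  have m: "m = (if q < t then q + n - t else q - t)"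
    using assms unfolding m_def
    by (auto simp: mod_if)
  have b: "U_delta n m SB < n" using d_lt assms lt m_def by simp
  have "foldl (U_delta n) q (replicate (n-t) SA @ [SB] @ replicate t SA)
     = (U_delta n m SB + t) mod n"
    using r1 run_rep_a[OF assms(1) b] by (simp add: m_def)
  also have "\<dots> = (if q = t then t+1 else if q = t+1 then t else q)"
  proof -
    consider "q = t" | "q = t + 1" | "q < t" | "q > t + 1" by linarith
    then show ?thesis
    proof cases
      case 1 then have "m = 0" using m by simp
      then show ?thesis using 1 assms by simp
    next
      case 2 then have "m = 1" using m by simp
      then show ?thesis using 2 assms by simp
    next
      case 3 then have "m = q + n - t" using m by simp
      moreover have "q + n - t \<noteq> 0" "q + n - t \<noteq> 1" using 3 assms by auto
      ultimately have "U_delta n m SB = q + n - t" by simp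
      moreover have "(q + n - t + t) mod n = q" using 3 assms by simp
      ultimately show ?thesis using 3 by simp
    next
      case 4 then have "m = q - t" using m by simp
      moreover have "q - t \<noteq> 0" "q - t \<noteq> 1" using 4 by auto
      ultimately have "U_delta n m SB = q - t" by simp
      moreover have "(q - t + t) mod n = q" using 4 assms by simp
      ultimately show ?thesis using 4 by simp
    qed
  qed
  finally show ?thesis .
qed


lemma c_ins:
  assumes n: "n \<ge> 3" and sub: "S \<subseteq> {..<n}" and z: "0 \<in> S" and nl: "n - 1 \<notin> S"
  shows "{q. q < n \<and> foldl (U_delta n) q [SC] \<in> S} = insert (n-1) S"
proof (rule set_eqI)
  fix q
  show "(q \<in> {q. q < n \<and> foldl (U_delta n) q [SC] \<in> S}) = (q \<in> insert (n-1) S)"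
  proof (cases "q = n - 1")
    case True then show ?thesis using n z by simp
  next
    case False
    have "q \<in> S \<Longrightarrow> q < n" using sub by blast
    then show ?thesis using False by auto
  qed
qed

lemma ins_last:
  assumes n: "n \<ge> 3"
  shows "j < n - 1 \<Longrightarrow> S \<in> range (PP n) \<Longrightarrow> S \<subseteq> {..<n} \<Longrightarrow> n - 1 \<notin> S \<Longrightarrow> j \<in> S
    \<Longrightarrow> insert (n-1) S \<in> range (PP n)"
proof (induction j arbitrary: S)
  case 0
  then show ?case using reach_pre[OF n 0(2), of "[SC]"] c_ins[OF n] by simp
next
  case (Suc j)
  define w where "w = replicate (n-j) SA @ [SB] @ replicate j SA"
  define tau where "tau = (\<lambda>q::nat. if q = j then j+1 else if q = j+1 then j else q)"
  have run: "\<And>q. q < n \<Longrightarrow> foldl (U_delta n) q w = tau q"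
    unfolding w_def tau_def using run_swap[OF n] Suc.prems(1) by simp
  have tt: "\<And>q. tau (tau q) = q" unfolding tau_def by auto
  have tl: "\<And>q. q < n \<Longrightarrow> tau q < n" unfolding tau_def using Suc.prems(1) by auto
  have tn: "tau (n - 1) = n - 1" unfolding tau_def using Suc.prems(1) by auto
  have tj: "tau j = Suc j" unfolding tau_def by simp
  define S' where "S' = {q. q < n \<and> tau q \<in> S}"
  have S'R: "S' \<in> range (PP n)"
  proof -
    have "S' = {q. q < n \<and> foldl (U_delta n) q w \<in> S}" using run unfolding S'_def by auto
    then show ?thesis using reach_pre[OF n Suc.prems(2)] by simp
  qed
  have jlt: "j < n - 1" using Suc.prems(1) by simp
  have "insert (n-1) S' \<in> range (PP n)"
  proof (rule Suc.IH[OF jlt S'R])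
    show "S' \<subseteq> {..<n}" unfolding S'_def by blast
    show "n - 1 \<notin> S'" unfolding S'_def using tn Suc.prems(4) by simp
    show "j \<in> S'" unfolding S'_def using tj Suc.prems(5) jlt by simp
  qed
  then have "{q. q < n \<and> foldl (U_delta n) q w \<in> insert (n-1) S'} \<in> range (PP n)"
    using reach_pre[OF n] by blast
  moreover have "{q. q < n \<and> foldl (U_delta n) q w \<in> insert (n-1) S'} = insert (n-1) S"
  proof (rule set_eqI)
    fix q
    show "(q \<in> {q. q < n \<and> foldl (U_delta n) q w \<in> insert (n-1) S'}) = (q \<in> insert (n-1) S)"
    proof (cases "q < n")
      case True
      have "(tau q = n - 1) = (q = n - 1)" using tt tn by metis
      then show ?thesis using True run tt tl unfolding S'_def by auto
    next
      case False
      then show ?thesis using Suc.prems(3) n by auto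
    qed
  qed
  ultimately show ?case by simp
qed

lemma ins_any:
  assumes n: "n \<ge> 3" and R: "S \<in> range (PP n)" and sub: "S \<subseteq> {..<n}" and ne: "S \<noteq> {}"
    and x: "x < n" "x \<notin> S"
  shows "insert x S \<in> range (PP n)"
proof -
  define S1 where "S1 = {q. q < n \<and> (q + (x+1)) mod n \<in> S}"
  have S1R: "S1 \<in> range (PP n)"
  proof -
    have "S1 = {q. q < n \<and> foldl (U_delta n) q (replicate (x+1) SA) \<in> S}"
      unfolding S1_def using run_rep_a[OF n, of _ "x+1"] by (auto simp del: replicate_Suc)
    then show ?thesis using reach_pre[OF n R, of "replicate (x+1) SA"] by (simp del: replicate_Suc)
  qed
  have bk: "\<And>q. q < n \<Longrightarrow> ((q + (n-x-1)) mod n + (x+1)) mod n = q"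
  proof -
    fix q assume q: "q < n"
    have "((q + (n-x-1)) mod n + (x+1)) mod n = (q + (n-x-1) + (x+1)) mod n"
      by (rule mod_add_left_eq)
    also have "q + (n-x-1) + (x+1) = q + n" using x by simp
    finally show "((q + (n-x-1)) mod n + (x+1)) mod n = q" using q by simp
  qed
  have fwd: "\<And>q. q < n \<Longrightarrow> ((q + (x+1)) mod n + (n-x-1)) mod n = q"
  proof -
    fix q assume q: "q < n"
    have "((q + (x+1)) mod n + (n-x-1)) mod n = (q + (x+1) + (n-x-1)) mod n"
      by (rule mod_add_left_eq)
    also have "q + (x+1) + (n-x-1) = q + n" using x by simp
    finally show "((q + (x+1)) mod n + (n-x-1)) mod n = q" using q by simp
  qed
  have nl: "n - 1 \<notin> S1"
  proof
    assume "n - 1 \<in> S1"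
    then have "(n - 1 + (x+1)) mod n \<in> S" unfolding S1_def by blast
    moreover have "n - 1 + (x+1) = x + n" using n by simp
    ultimately show False using x by simp
  qed
  obtain y where y: "y \<in> S" using ne by blast
  define j where "j = (y + (n-x-1)) mod n"
  have jS1: "j \<in> S1" unfolding S1_def j_def using bk y sub by auto
  have jlt: "j < n - 1" using jS1 nl unfolding S1_def by (cases "j = n - 1") auto
  have I: "insert (n-1) S1 \<in> range (PP n)"
    by (rule ins_last[OF n jlt S1R _ nl jS1]) (unfold S1_def, blast)
  have "{q. q < n \<and> foldl (U_delta n) q (replicate (n-x-1) SA) \<in> insert (n-1) S1} \<in> range (PP n)"
    using reach_pre[OF n I] by blast
  moreover have "{q. q < n \<and> foldl (U_delta n) q (replicate (n-x-1) SA) \<in> insert (n-1) S1} = insert x S"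
  proof -
    have e: "\<And>q. q < n \<Longrightarrow> ((q + (n-x-1)) mod n = n - 1) = (q = x)"
    proof -
      fix q assume q: "q < n"
      show "((q + (n-x-1)) mod n = n - 1) = (q = x)"
      proof
        assume h: "(q + (n-x-1)) mod n = n - 1"
        have "((q + (n-x-1)) mod n + (x+1)) mod n = (n - 1 + (x+1)) mod n" using h by simp
        also have "n - 1 + (x+1) = x + n" using n by simp
        finally show "q = x" using bk[OF q] x by simp
      next
        assume "q = x" then show "(q + (n-x-1)) mod n = n - 1" using x by simp
      qed
    qed
    show ?thesis
      using run_rep_a[OF n, of _ "n-x-1"] e bk sub x unfolding S1_def by (auto simp del: replicate_Suc)
  qed
  ultimately show ?thesis by simp
qed

lemma all_reach:
  assumes n: "n \<ge> 3"
  shows "S \<subseteq> {..<n} \<Longrightarrow> S \<in> range (PP n)"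
proof -
  assume sub: "S \<subseteq> {..<n}"
  have fin: "finite S" using sub finite_subset by blast
  show ?thesis using fin sub
  proof (induction S rule: finite_induct)
    case empty
    have "PP n [SC, SA] = {}"
      using n by (auto simp: PP_def split: if_splits)
    then show ?case by (metis rangeI)
  next
    case (insert x F)
    show ?case
    proof (cases "F = {}")
      case True
      have "PP n (replicate (n - x) SA) = {x}"
      proof -
        have xn: "x < n" using insert by simp
        have "\<And>q. q < n \<Longrightarrow> ((q + (n - x)) mod n = 0) = (q = x)"
        proof -
          fix q assume q: "q < n"
          show "((q + (n - x)) mod n = 0) = (q = x)"
            using q xn by (auto simp: mod_if)
        qed
        then show ?thesis unfolding PP_def using run_rep_a[OF n] xn by auto
      qed
      then show ?thesis using True by (metis rangeI)
    next
      case False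
      then show ?thesis using ins_any[OF n] insert by auto
    qed
  qed
qed


lemma kstar_U0: "kstar (U0 n) = U0 n"
proof
  show "U0 n \<subseteq> kstar (U0 n)"
  proof
    fix w assume "w \<in> U0 n"
    then show "w \<in> kstar (U0 n)" unfolding kstar_def
      by (intro CollectI exI[of _ "[w]"]) auto
  qed
next
  have "set ws \<subseteq> U0 n \<Longrightarrow> concat ws \<in> U0 n" for ws
    by (induction ws) (auto simp: U0_def dfa_lang_def)
  then show "kstar (U0 n) \<subseteq> U0 n" unfolding kstar_def by blast
qed

lemma enc_lt: "A \<subseteq> {..<m} \<Longrightarrow> set_encode A < 2 ^ m"
proof (induction m arbitrary: A)
  case 0 then show ?case by simp
next
  case (Suc m)
  show ?case
  proof (cases "m \<in> A")
    case True
    have fin: "finite (A - {m})" using Suc.prems finite_subset by blast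
    have "A = insert m (A - {m})" using True by blast
    then have "set_encode A = 2^m + set_encode (A - {m})"
      using fin by (metis Diff_iff insertI1 set_encode_insert)
    moreover have "set_encode (A - {m}) < 2^m" using Suc.prems by (intro Suc.IH) auto
    ultimately show ?thesis by simp
  next
    case False
    then have "set_encode A < 2^m" using Suc.prems by (intro Suc.IH) (auto simp: less_Suc_eq)
    then show ?thesis by simp
  qed
qed

lemma PP_sub: "PP n u \<subseteq> {..<n}" unfolding PP_def by auto

lemma mem_rev: "w \<in> reversal (U0 n) \<longleftrightarrow> foldl (U_delta n) 0 (rev w) = 0"
  unfolding reversal_def U0_def dfa_lang_def
  by (auto simp: image_iff)

lemma dfa_run_lt: "complete_dfa k \<delta> q0 F \<Longrightarrow> q < k \<Longrightarrow> foldl \<delta> q w < k"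
  by (induction w arbitrary: q) (auto simp: complete_dfa_def)

lemma upper:
  assumes n: "n \<ge> 3"
  shows "\<exists>\<delta> q0 F. complete_dfa (2^n) \<delta> q0 F \<and> dfa_lang \<delta> q0 F = reversal (U0 n)"
proof -
  define D where "D = (\<lambda>s x. set_encode {q. q < n \<and> U_delta n q x \<in> set_decode s})"
  define F where "F = {s. s < 2^n \<and> 0 \<in> set_decode s}"
  have run: "foldl D (set_encode {0}) w = set_encode (PP n (rev w))" for w
  proof (induction w rule: rev_induct)
    case Nil
    have "PP n [] = {0}" using n unfolding PP_def by auto
    then show ?case by simp
  next
    case (snoc x w)
    have fin: "finite (PP n (rev w))" using PP_sub finite_subset by blast
    have "PP n ([x] @ rev w) = {q. q < n \<and> U_delta n q x \<in> PP n (rev w)}"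
      using PP_app[OF n, of "[x]"] by simp
    then show ?case using snoc fin unfolding D_def by simp
  qed
  have "complete_dfa (2^n) D (set_encode {0}) F"
    unfolding complete_dfa_def
  proof (intro conjI allI impI)
    show "set_encode {0} < 2^n" using n by (intro enc_lt) auto
    show "D q s < 2^n" for q s unfolding D_def by (intro enc_lt) auto
    show "F \<subseteq> {..<2^n}" unfolding F_def by auto
  qed
  moreover have "dfa_lang D (set_encode {0}) F = reversal (U0 n)"
  proof (rule set_eqI)
    fix w
    have fin: "finite (PP n (rev w))" using PP_sub finite_subset by blast
    have e: "set_decode (foldl D (set_encode {0}) w) = PP n (rev w)"
      by (simp only: run set_encode_inverse[OF fin])
    have lt: "foldl D (set_encode {0}) w < 2^n"
      by (simp only: run) (rule enc_lt[OF PP_sub])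
    have "w \<in> dfa_lang D (set_encode {0}) F \<longleftrightarrow> 0 \<in> PP n (rev w)"
      unfolding dfa_lang_def F_def using e lt by blast
    also have "\<dots> \<longleftrightarrow> foldl (U_delta n) 0 (rev w) = 0" using n unfolding PP_def by simp
    also have "\<dots> \<longleftrightarrow> w \<in> reversal (U0 n)" using mem_rev by simp
    finally show "w \<in> dfa_lang D (set_encode {0}) F \<longleftrightarrow> w \<in> reversal (U0 n)" .
  qed
  ultimately show ?thesis by blast
qed

lemma lower:
  assumes n: "n \<ge> 3" and D: "complete_dfa k \<delta> q0 F" and L: "dfa_lang \<delta> q0 F = reversal (U0 n)"
  shows "2^n \<le> k"
proof -
  have ex: "\<forall>S\<in>Pow {..<n}. \<exists>u. PP n u = S" using all_reach[OF n] by (metis PowD rangeE)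
  then obtain g where g: "\<And>S. S \<in> Pow {..<n} \<Longrightarrow> PP n (g S) = S" by metis
  define f where "f = (\<lambda>S. foldl \<delta> q0 (rev (g S)))"
  have q0: "q0 < k" using D unfolding complete_dfa_def by simp
  have img: "f ` Pow {..<n} \<subseteq> {..<k}" unfolding f_def using dfa_run_lt[OF D q0] by auto
  have key: "q \<in> S \<longleftrightarrow> foldl \<delta> (f S) (replicate q SA) \<in> F" if S: "S \<in> Pow {..<n}" and q: "q < n" for S q
  proof -
    have "foldl \<delta> (f S) (replicate q SA) \<in> F \<longleftrightarrow> rev (g S) @ replicate q SA \<in> dfa_lang \<delta> q0 F"
      unfolding dfa_lang_def f_def by simp
    also have "\<dots> \<longleftrightarrow> foldl (U_delta n) 0 (replicate q SA @ g S) = 0"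
      using L mem_rev by simp
    also have "\<dots> \<longleftrightarrow> foldl (U_delta n) q (g S) = 0"
      using run_rep_a[OF n, of 0 q] n q by simp
    also have "\<dots> \<longleftrightarrow> q \<in> PP n (g S)" unfolding PP_def using q by simp
    also have "\<dots> \<longleftrightarrow> q \<in> S" using g[OF S] by simp
    finally show ?thesis by simp
  qed
  have inj: "inj_on f (Pow {..<n})"
  proof (rule inj_onI)
    fix S T assume S: "S \<in> Pow {..<n}" and T: "T \<in> Pow {..<n}" and e: "f S = f T"
    show "S = T"
    proof (rule set_eqI)
      fix q
      show "q \<in> S \<longleftrightarrow> q \<in> T"
      proof (cases "q < n")
        case True then show ?thesis using key[OF S True] key[OF T True] e by simp
      next
        case False then show ?thesis using S T by auto
      qed
    qed
  qed
  have "card (Pow {..<n}) \<le> card {..<k}" by (rule card_inj_on_le[OF inj img]) simp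
  then show ?thesis by (simp add: card_Pow)
qed

theorem theorem7:
  fixes n :: nat
  assumes "n \<ge> 3"
  shows "state_complexity (reversal (kstar (U0 n))) = 2 ^ n"
  unfolding state_complexity_def kstar_U0
proof (rule Least_equality)
  show "\<exists>\<delta> q0 F. complete_dfa (2^n) \<delta> q0 F \<and> dfa_lang \<delta> q0 F = reversal (U0 n)"
    by (rule upper[OF assms])
  show "\<And>k. \<exists>\<delta> q0 F. complete_dfa k \<delta> q0 F \<and> dfa_lang \<delta> q0 F = reversal (U0 n) \<Longrightarrow> 2^n \<le> k"
    using lower[OF assms] by blast
qed

end
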